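(* Let $i\geq1$ and let $\tau$ be an SSRCT of shape $\alpha$ such that $\widetilde\alpha$ has an addable node in column $i$. Then $\mu_i(\tau)$ is an SSRCT of shape $\gamma/\!\!/(1)$, where $\gamma=u_i(\alpha)$.
   Context: Compositions (positive parts) are drawn as reverse composition diagrams: row $r$ from the top has $\alpha_r$ left-justified boxes; $\widetilde\alpha$ is the sorted partition. For the skew shape $\gamma/\!\!/(1)$ the single inner box is the first box of the last row. An SSRCT of shape $\gamma/\!\!/\beta$ (inner shape $\beta$ occupying, left-justified, the last $l(\beta)$ rows) is a filling of the non-inner boxes with positive integers such that rows weakly decrease left to right, the filled first-column entries strictly increase top to bottom, and for rows $r<s$ and column $c$ with $(s,c+1)$ a filled box: if $(r,c)$ is inner or $\tau(r,c)\geq\tau(s,c+1)$, then $(r,c+1)$ is inner or a filled box with $\tau(r,c+1)>\tau(s,c+1)$. Operators: $\mathfrak{d}_j(\alpha)$ subtracts $1$ from the rightmost part equal to $j$ (omitting a resulting $0$); $\mathfrak{v}_{[i-1]}=\mathfrak{d}_1\cdots\mathfrak{d}_{i-1}$ ($\mathfrak{d}_{i-1}$ first; $\mathfrak{v}_{[0]}=\mathrm{id}$); $a_i$ appends a part $i$; $u_i=a_i\mathfrak{v}_{[i-1]}$. $\phi_{j+1}$ ($j\geq1$), for an SSRCT $\tau$ of straight shape with a part equal to $j$ ($\tau=0$ outside the shape): $r_1$ is the largest row index of a part equal to $j$; for $t\geq2$, $r_t$ is the largest $r<r_{t-1}$ with $\tau(r,j)>\tau(r_{t-1},j)\geq\tau(r,j+1)$,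 ending at $r_k$; $\phi_{j+1}(\tau)$ places, for $t=k,\ldots,2$, the original $\tau(r_{t-1},j)$ into box $(r_t,j)$ and deletes box $(r_1,j)$ (and its row if empty); $\tau(r_k,j)$ exits. $\mu_i(\tau)$: if $i=1$ let $\tau'=\tau$, $H=\varnothing$; if $i\geq2$ let $\tau'=\phi_2(\cdots\phi_i(\tau)\cdots)$ and $H$ the multiset of the $i-1$ exiting entries. If $\tau'$ has shape $(\gamma_1,\ldots,\gamma_s)$, $\mu_i(\tau)$ is the filling of $(\gamma_1,\ldots,\gamma_s,i)/\!\!/(1)$ whose first $s$ rows are $\tau'$ and whose last row has an empty first box followed by the elements of $H$ in decreasing order. *)

theory Defs
  imports Main
begin

(* A filling (tableau) is a list of rows
   (nat list list); row r (1-indexed, from the top) is  T ! (r-1), and its c-th box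
   (1-indexed, from the left) holds  T ! (r-1) ! (c-1).  Boxes outside the diagram have
   value 0 (function ent).  In a skew filling, the values stored in inner boxes are
   irrelevant (we store 0). *)

definition is_comp :: "nat list \<Rightarrow> bool" where
  "is_comp \<alpha> \<longleftrightarrow> (\<forall>x\<in>set \<alpha>. 0 < x)"

definition ent :: "nat list list \<Rightarrow> nat \<Rightarrow> nat \<Rightarrow> nat" where
  "ent T r c = (if 1 \<le> r \<and> r \<le> length T \<and> 1 \<le> c \<and> c \<le> length (T ! (r - 1))
                then T ! (r - 1) ! (c - 1) else 0)"

definition in_shape :: "nat list \<Rightarrow> nat \<Rightarrow> nat \<Rightarrow> bool" where
  "in_shape \<gamma> r c \<longleftrightarrow> 1 \<le> r \<and> r \<le> length \<gamma> \<and> 1 \<le> c \<and> c \<le> \<gamma> ! (r - 1)"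

(* inner shape \<beta> occupies, left-justified, the last length \<beta> rows of \<gamma> *)
definition inner :: "nat list \<Rightarrow> nat list \<Rightarrow> nat \<Rightarrow> nat \<Rightarrow> bool" where
  "inner \<gamma> \<beta> r c \<longleftrightarrow> length \<gamma> - length \<beta> < r \<and> r \<le> length \<gamma> \<and> 1 \<le> c
      \<and> c \<le> \<beta> ! (r - (length \<gamma> - length \<beta>) - 1)"

definition filled :: "nat list \<Rightarrow> nat list \<Rightarrow> nat \<Rightarrow> nat \<Rightarrow> bool" where
  "filled \<gamma> \<beta> r c \<longleftrightarrow> in_shape \<gamma> r c \<and> \<not> inner \<gamma> \<beta> r c"

(* SSRCT of shape \<gamma>//\<beta>; straight shape \<alpha> is \<alpha>//[] *)
definition ssrct :: "nat list \<Rightarrow> nat list \<Rightarrow> nat list list \<Rightarrow> bool" where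
  "ssrct \<gamma> \<beta> T \<longleftrightarrow>
     is_comp \<gamma> \<and> is_comp \<beta> \<and> length \<beta> \<le> length \<gamma>
   \<and> (\<forall>k < length \<beta>. \<beta> ! k \<le> \<gamma> ! (length \<gamma> - length \<beta> + k))
   \<and> map length T = \<gamma>
   \<and> (\<forall>r c. filled \<gamma> \<beta> r c \<longrightarrow> 0 < ent T r c)
   \<and> (\<forall>r c. filled \<gamma> \<beta> r c \<and> filled \<gamma> \<beta> r (c + 1) \<longrightarrow> ent T r (c + 1) \<le> ent T r c)
   \<and> (\<forall>r s. r < s \<and> filled \<gamma> \<beta> r 1 \<and> filled \<gamma> \<beta> s 1 \<longrightarrow> ent T r 1 < ent T s 1)
   \<and> (\<forall>r s c. r < s \<and> 1 \<le> c \<and> filled \<gamma> \<beta> s (c + 1)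
        \<and> (inner \<gamma> \<beta> r c \<or> (filled \<gamma> \<beta> r c \<and> ent T s (c + 1) \<le> ent T r c))
        \<longrightarrow> (inner \<gamma> \<beta> r (c + 1)
             \<or> (filled \<gamma> \<beta> r (c + 1) \<and> ent T s (c + 1) < ent T r (c + 1))))"

definition dop :: "nat \<Rightarrow> nat list \<Rightarrow> nat list" where
  "dop j \<alpha> = (if j \<in> set \<alpha> then
      (let k = (GREATEST k. k < length \<alpha> \<and> \<alpha> ! k = j) in
        if j = 1 then take k \<alpha> @ drop (Suc k) \<alpha> else \<alpha>[k := j - 1])
     else \<alpha>)"

(* vop m = d_1 ... d_m  (d_m applied first) *)
fun vop :: "nat \<Rightarrow> nat list \<Rightarrow> nat list" where
  "vop 0 \<alpha> = \<alpha>"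
| "vop (Suc m) \<alpha> = vop m (dop (Suc m) \<alpha>)"

definition aop :: "nat \<Rightarrow> nat list \<Rightarrow> nat list" where
  "aop i \<alpha> = \<alpha> @ [i]"

definition uop :: "nat \<Rightarrow> nat list \<Rightarrow> nat list" where
  "uop i \<alpha> = aop i (vop (i - 1) \<alpha>)"

definition sorted_partition :: "nat list \<Rightarrow> nat list" where
  "sorted_partition \<alpha> = rev (sort \<alpha>)"

definition partval :: "nat list \<Rightarrow> nat \<Rightarrow> nat" where
  "partval lam k = (if 1 \<le> k \<and> k \<le> length lam then lam ! (k - 1) else 0)"

definition addable_in_col :: "nat list \<Rightarrow> nat \<Rightarrow> bool" where
  "addable_in_col lam i \<longleftrightarrow> (\<exists>k \<ge> 1. partval lam k = i - 1 \<and> (k = 1 \<or> i \<le> partval lam (k - 1)))"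

definition phi_next :: "nat list list \<Rightarrow> nat \<Rightarrow> nat \<Rightarrow> nat option" where
  "phi_next T j r = (let S = {r'. 1 \<le> r' \<and> r' < r \<and> ent T r j < ent T r' j
                                 \<and> ent T r' (j + 1) \<le> ent T r j}
                     in if S = {} then None else Some (Max S))"

fun phi_chain :: "nat \<Rightarrow> nat list list \<Rightarrow> nat \<Rightarrow> nat \<Rightarrow> nat list" where
  "phi_chain 0 T j r = [r]"
| "phi_chain (Suc n) T j r =
     r # (case phi_next T j r of None \<Rightarrow> [] | Some r' \<Rightarrow> phi_chain n T j r')"

(* phi j T = (phi_{j+1}(T), exiting entry); uses a part equal to j *)
definition phi :: "nat \<Rightarrow> nat list list \<Rightarrow> nat list list \<times> nat" where
  "phi j T = (let r1 = Max {r. 1 \<le> r \<and> r \<le> length T \<and> length (T ! (r - 1)) = j};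
                  rs = phi_chain r1 T j r1;
                  T1 = fold (\<lambda>(a, b) U. U[a - 1 := (U ! (a - 1))[j - 1 := ent T b j]])
                            (zip (tl rs) rs) T;
                  row' = butlast (T1 ! (r1 - 1));
                  T2 = (if row' = [] then take (r1 - 1) T1 @ drop r1 T1
                        else T1[r1 - 1 := row'])
              in (T2, ent T (last rs) j))"

(* apply phi_{m+1}, then phi_m, ..., phi_2; collect exiting entries *)
fun mu_aux :: "nat \<Rightarrow> nat list list \<Rightarrow> nat list list \<times> nat list" where
  "mu_aux 0 T = (T, [])"
| "mu_aux (Suc m) T = (let (T1, x) = phi (Suc m) T; (T2, H) = mu_aux m T1 in (T2, x # H))"

(* mu_i(T): filling of shape (gamma_1..gamma_s, i)//(1); inner box stores 0 *)
definition mu :: "nat \<Rightarrow> nat list list \<Rightarrow> nat list list" where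
  "mu i T = (let (T', H) = mu_aux (i - 1) T in T' @ [0 # rev (sort H)])"

end

theory Submission
  imports Defs
begin



definition good :: "nat list list \<Rightarrow> bool" where
 "good T \<longleftrightarrow> (\<forall>row\<in>set T. row \<noteq> [] \<and> (\<forall>x\<in>set row. 0 < x)) \<and>
   (\<forall>r c. 1 \<le> c \<longrightarrow> ent T r (Suc c) \<le> ent T r c) \<and>
   (\<forall>r s. 1 \<le> r \<and> r < s \<and> 0 < ent T s 1 \<longrightarrow> ent T r 1 < ent T s 1) \<and>
   (\<forall>r s c. r < s \<and> 1 \<le> c \<and> 0 < ent T s (Suc c) \<and> ent T s (Suc c) \<le> ent T r c
       \<longrightarrow> ent T s (Suc c) < ent T r (Suc c))"

definition box :: "nat list list \<Rightarrow> nat \<Rightarrow> nat \<Rightarrow> bool" where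
 "box T r c \<longleftrightarrow> 1 \<le> r \<and> r \<le> length T \<and> 1 \<le> c \<and> c \<le> length (T ! (r - 1))"

lemma ent_box: "ent T r c = (if box T r c then T ! (r - 1) ! (c - 1) else 0)"
  by (simp add: ent_def box_def)

lemma ent_nz_box: "ent T r c \<noteq> 0 \<Longrightarrow> box T r c"
  by (auto simp: ent_box split: if_splits)

lemma good_pos: "good T \<Longrightarrow> 0 < ent T r c \<longleftrightarrow> box T r c"
proof
  assume g: "good T" and b: "box T r c"
  hence "T ! (r - 1) \<in> set T" by (auto simp: box_def)
  moreover have "T ! (r - 1) ! (c - 1) \<in> set (T ! (r - 1))" using b by (auto simp: box_def)
  ultimately show "0 < ent T r c" using g b by (auto simp: good_def ent_box)
qed (auto intro: ent_nz_box)

lemma good_R: "good T \<Longrightarrow> 1 \<le> c \<Longrightarrow> ent T r (Suc c) \<le> ent T r c"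
  by (simp add: good_def)

lemma good_R': assumes "good T" "1 \<le> c" "c \<le> d" shows "ent T r d \<le> ent T r c"
  using assms(3)
proof (induction d rule: dec_induct)
  case (step n) thus ?case using good_R[of T n r] assms by simp
qed simp

lemma good_F: "good T \<Longrightarrow> 1 \<le> r \<Longrightarrow> r < s \<Longrightarrow> 0 < ent T s 1 \<Longrightarrow> ent T r 1 < ent T s 1"
  by (simp add: good_def)

lemma good_T: "good T \<Longrightarrow> r < s \<Longrightarrow> 1 \<le> c \<Longrightarrow> 0 < ent T s (Suc c) \<Longrightarrow> ent T s (Suc c) \<le> ent T r c
   \<Longrightarrow> ent T s (Suc c) < ent T r (Suc c)"
  unfolding good_def by blast

lemma inner_nil: "\<not> inner \<gamma> [] r c"
  by (simp add: inner_def)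

lemma ss_good:
  assumes "ssrct \<alpha> [] T" shows "\<alpha> = map length T" "good T"
proof -
  have ml: "map length T = \<alpha>" and comp: "is_comp \<alpha>" using assms by (simp_all add: ssrct_def)
  have fb: "filled \<alpha> [] r c \<longleftrightarrow> box T r c" for r c
    using ml by (auto simp: filled_def inner_nil in_shape_def box_def)
  show "\<alpha> = map length T" using ml by simp
  have pos: "box T r c \<Longrightarrow> 0 < ent T r c" for r c using assms fb by (simp add: ssrct_def)
  have bpos: "0 < ent T r c \<longleftrightarrow> box T r c" for r c using pos ent_nz_box by (metis neq0_conv)
  have A: "\<forall>row\<in>set T. row \<noteq> [] \<and> (\<forall>x\<in>set row. 0 < x)"
  proof
    fix row assume "row \<in> set T"
    then obtain k where k: "k < length T" "row = T ! k" by (auto simp: in_set_conv_nth)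
    have "row \<noteq> []" using comp ml k unfolding is_comp_def by auto
    moreover have "\<forall>x\<in>set row. 0 < x"
    proof
      fix x assume "x \<in> set row"
      then obtain m where m: "m < length row" "x = row ! m" by (auto simp: in_set_conv_nth)
      have "box T (Suc k) (Suc m)" using k m by (simp add: box_def)
      from pos[OF this] show "0 < x" using k m by (simp add: ent_box box_def)
    qed
    ultimately show "row \<noteq> [] \<and> (\<forall>x\<in>set row. 0 < x)" by simp
  qed
  have R: "\<forall>r c. 1 \<le> c \<longrightarrow> ent T r (Suc c) \<le> ent T r c"
  proof (intro allI impI)
    fix r c :: nat assume c: "1 \<le> c"
    show "ent T r (Suc c) \<le> ent T r c"
    proof (cases "box T r (Suc c)")
      case True
      hence "box T r c" using c by (simp add: box_def)
      with True show ?thesis using assms fb unfolding ssrct_def by simp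
    next
      case False thus ?thesis by (simp add: ent_box)
    qed
  qed
  have F: "\<forall>r s. 1 \<le> r \<and> r < s \<and> 0 < ent T s 1 \<longrightarrow> ent T r 1 < ent T s 1"
  proof (intro allI impI)
    fix r s :: nat assume h: "1 \<le> r \<and> r < s \<and> 0 < ent T s 1"
    hence bs: "box T s 1" using bpos by simp
    have "T ! (r - 1) \<in> set T" using h bs by (auto simp: box_def)
    hence "box T r 1" using h bs A by (auto simp: box_def Suc_le_eq)
    thus "ent T r 1 < ent T s 1" using bs h assms fb unfolding ssrct_def by simp
  qed
  have TT: "\<forall>r s c. r < s \<and> 1 \<le> c \<and> 0 < ent T s (Suc c) \<and> ent T s (Suc c) \<le> ent T r c
       \<longrightarrow> ent T s (Suc c) < ent T r (Suc c)"
  proof (intro allI impI)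
    fix r s c :: nat assume h: "r < s \<and> 1 \<le> c \<and> 0 < ent T s (Suc c) \<and> ent T s (Suc c) \<le> ent T r c"
    hence "box T s (Suc c)" "box T r c" using bpos by (auto, metis le_trans bpos le_refl not_le less_le_trans)
    hence "filled \<alpha> [] s (c+1)" "filled \<alpha> [] r c" using fb by auto
    with h assms have "filled \<alpha> [] r (c + 1) \<and> ent T s (c + 1) < ent T r (c + 1)"
      unfolding ssrct_def by (auto simp: inner_nil)
    thus "ent T s (Suc c) < ent T r (Suc c)" by simp
  qed
  show "good T" unfolding good_def using A R F TT by blast
qed




definition candS :: "nat list list \<Rightarrow> nat \<Rightarrow> nat \<Rightarrow> nat set" where
  "candS T j r = {r'. 1 \<le> r' \<and> r' < r \<and> ent T r j < ent T r' j \<and> ent T r' (j + 1) \<le> ent T r j}"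

lemma candS_fin: "finite (candS T j r)"
  by (rule finite_subset[of _ "{..<r}"]) (auto simp: candS_def)

lemma phi_next_eq: "phi_next T j r = (if candS T j r = {} then None else Some (Max (candS T j r)))"
  by (simp add: phi_next_def candS_def Let_def)

lemma phi_next_Some:
  assumes "phi_next T j r = Some r'"
  shows "1 \<le> r'" "r' < r" "ent T r j < ent T r' j" "ent T r' (Suc j) \<le> ent T r j"
    "\<And>q. r' < q \<Longrightarrow> q < r \<Longrightarrow> \<not> (ent T r j < ent T q j \<and> ent T q (Suc j) \<le> ent T r j)"
proof -
  have ne: "candS T j r \<noteq> {}" and eq: "r' = Max (candS T j r)"
    using assms by (auto simp: phi_next_eq split: if_splits)
  have "r' \<in> candS T j r" using ne eq candS_fin Max_in by blast
  thus "1 \<le> r'" "r' < r" "ent T r j < ent T r' j" "ent T r' (Suc j) \<le> ent T r j"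
    by (auto simp: candS_def)
  fix q assume "r' < q" "q < r"
  show "\<not> (ent T r j < ent T q j \<and> ent T q (Suc j) \<le> ent T r j)"
  proof
    assume "ent T r j < ent T q j \<and> ent T q (Suc j) \<le> ent T r j"
    hence "q \<in> candS T j r" using \<open>q < r\<close> \<open>r' < q\<close> \<open>1 \<le> r'\<close> by (auto simp: candS_def)
    hence "q \<le> r'" using eq candS_fin by simp
    thus False using \<open>r' < q\<close> by simp
  qed
qed

lemma phi_next_None:
  assumes "phi_next T j r = None" "1 \<le> q" "q < r"
  shows "\<not> (ent T r j < ent T q j \<and> ent T q (Suc j) \<le> ent T r j)"
  using assms by (auto simp: phi_next_eq candS_def split: if_splits)

lemma pc_hd: "phi_chain n T j r \<noteq> [] \<and> hd (phi_chain n T j r) = r"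
  by (cases n) auto

lemma pc_nth0: "phi_chain n T j r ! 0 = r"
  by (cases n) auto

lemma pc_set: "x \<in> set (phi_chain n T j r) \<Longrightarrow> x \<le> r \<and> (x \<noteq> r \<longrightarrow> 1 \<le> x)"
proof (induction n arbitrary: r)
  case (Suc n)
  show ?case
  proof (cases "phi_next T j r")
    case (Some r')
    note s = phi_next_Some[OF Some]
    show ?thesis using Suc.prems Suc.IH[of r'] Some s by (auto split: option.splits)
  qed (use Suc.prems in auto)
qed auto

lemma pc_sorted: "sorted_wrt (>) (phi_chain n T j r)"
proof (induction n arbitrary: r)
  case (Suc n)
  show ?case
  proof (cases "phi_next T j r")
    case (Some r')
    note s = phi_next_Some[OF Some]
    have "\<forall>x\<in>set (phi_chain n T j r'). x < r" using pc_set[of _ n T j r'] s(2) by fastforce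
    thus ?thesis using Suc.IH[of r'] Some by simp
  qed simp
qed simp

lemma pc_next: "Suc t < length (phi_chain n T j r) \<Longrightarrow>
   phi_next T j (phi_chain n T j r ! t) = Some (phi_chain n T j r ! Suc t)"
proof (induction n arbitrary: r t)
  case (Suc n)
  show ?case
  proof (cases "phi_next T j r")
    case None thus ?thesis using Suc.prems by simp
  next
    case (Some r')
    show ?thesis
    proof (cases t)
      case 0 thus ?thesis using Some by (simp add: pc_nth0)
    next
      case (Suc t') thus ?thesis using Suc.IH[of t' r'] Some Suc.prems by simp
    qed
  qed
qed simp

lemma pc_last: "r \<le> Suc n \<Longrightarrow> phi_next T j (last (phi_chain n T j r)) = None"
proof (induction n arbitrary: r)
  case 0 thus ?case by (auto simp: phi_next_eq candS_def)
next
  case (Suc n)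
  show ?case
  proof (cases "phi_next T j r")
    case (Some r')
    have "r' < r" using phi_next_Some[OF Some] by simp
    hence "r' \<le> Suc n" using Suc.prems by simp
    thus ?thesis using Suc.IH[of r'] Some pc_hd[of n T j r'] by simp
  qed simp
qed




lemma good_distinct:
  assumes g: "good T" and rs: "r < s" and p: "0 < ent T r c" "0 < ent T s c"
  shows "ent T r c \<noteq> ent T s c"
proof
  assume eq: "ent T r c = ent T s c"
  have br: "box T r c" using p g good_pos by blast
  hence r1: "1 \<le> r" and c1: "1 \<le> c" by (auto simp: box_def)
  show False
  proof (cases "c = 1")
    case True thus False using good_F[OF g r1 rs] p eq by simp
  next
    case False
    then obtain c' where c': "c = Suc c'" "1 \<le> c'" using c1 by (cases c) auto
    have "ent T r c \<le> ent T r c'" using good_R[OF g c'(2), of r] c' by simp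
    hence "ent T s (Suc c') < ent T r (Suc c')"
      using good_T[OF g rs c'(2)] p eq c' by simp
    thus False using eq c' by simp
  qed
qed

locale cctx =
  fixes T :: "nat list list" and j :: nat
  assumes good: "good T" and j1: "1 \<le> j" and jin: "j \<in> set (map length T)"
begin

abbreviation E where "E \<equiv> ent T"

definition r1 where "r1 = Max {r. 1 \<le> r \<and> r \<le> length T \<and> length (T ! (r - 1)) = j}"
definition rs where "rs = phi_chain r1 T j r1"

lemma r1_mem: "1 \<le> r1 \<and> r1 \<le> length T \<and> length (T ! (r1 - 1)) = j"
proof -
  let ?S = "{r. 1 \<le> r \<and> r \<le> length T \<and> length (T ! (r - 1)) = j}"
  have fin: "finite ?S" by (rule finite_subset[of _ "{..length T}"]) auto
  obtain k where k: "k < length T" "length (T ! k) = j" using jin by (auto simp: in_set_conv_nth)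
  have "Suc k \<in> ?S" using k by simp
  hence "?S \<noteq> {}" by blast
  from Max_in[OF fin this] show ?thesis unfolding r1_def by simp
qed

lemma r1_max: "1 \<le> s \<Longrightarrow> s \<le> length T \<Longrightarrow> length (T ! (s - 1)) = j \<Longrightarrow> s \<le> r1"
proof -
  let ?S = "{r. 1 \<le> r \<and> r \<le> length T \<and> length (T ! (r - 1)) = j}"
  have fin: "finite ?S" by (rule finite_subset[of _ "{..length T}"]) auto
  assume "1 \<le> s" "s \<le> length T" "length (T ! (s - 1)) = j"
  hence "s \<in> ?S" by simp
  thus "s \<le> r1" unfolding r1_def using fin by simp
qed

lemma r1_box: "box T r1 j" "\<not> box T r1 (Suc j)"
  using r1_mem j1 by (auto simp: box_def)

lemma E_r1: "0 < E r1 j" "E r1 (Suc j) = 0"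
proof -
  show "0 < E r1 j" using r1_box(1) good_pos[OF good] by blast
  show "E r1 (Suc j) = 0" using r1_box(2) by (simp add: ent_box)
qed

lemma below_r1: assumes "r1 < s" "0 < E s j" shows "0 < E s (Suc j)"
proof -
  have b: "box T s j" using assms good_pos[OF good] by blast
  hence "length (T ! (s - 1)) \<noteq> j" using r1_max[of s] assms(1) by (auto simp: box_def)
  hence "box T s (Suc j)" using b by (auto simp: box_def)
  thus ?thesis using good_pos[OF good] by blast
qed

lemma B0: assumes "r1 < s" "0 < E s j" shows "E r1 j < E s (Suc j)"
proof (rule ccontr)
  assume "\<not> ?thesis"
  hence "E s (Suc j) \<le> E r1 j" by simp
  from good_T[OF good assms(1) j1 below_r1[OF assms] this] show False using E_r1 by simp
qed

lemma rs_ne: "rs \<noteq> []" and rs0: "rs ! 0 = r1"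
  using pc_hd[of r1 T j r1] pc_nth0 unfolding rs_def by auto

lemma rs_sorted: "sorted_wrt (>) rs" unfolding rs_def by (rule pc_sorted)

lemma rs_lt: "t < u \<Longrightarrow> u < length rs \<Longrightarrow> rs ! u < rs ! t"
  using rs_sorted by (simp add: sorted_wrt_iff_nth_less)

lemma rs_distinct: "distinct rs"
  using rs_sorted by (metis sorted_wrt_iff_nth_less distinct_conv_nth nat_neq_iff less_irrefl)

lemma rs_next: "Suc t < length rs \<Longrightarrow> phi_next T j (rs ! t) = Some (rs ! Suc t)"
  unfolding rs_def by (rule pc_next)

lemma rs_last: "phi_next T j (last rs) = None"
  unfolding rs_def by (rule pc_last) simp

lemma rs_pos: "t < length rs \<Longrightarrow> 0 < E (rs ! t) j"
proof (induction t)
  case 0 thus ?case using rs0 E_r1 by simp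
next
  case (Suc t)
  thus ?case using phi_next_Some(3)[OF rs_next[OF Suc.prems]] by simp
qed

lemma rs_ge1: "t < length rs \<Longrightarrow> 1 \<le> rs ! t"
  using rs_pos good_pos[OF good] by (auto simp: box_def)

lemma rs_incr: "t < u \<Longrightarrow> u < length rs \<Longrightarrow> E (rs ! t) j < E (rs ! u) j"
proof (induction u)
  case (Suc u)
  have "E (rs ! u) j < E (rs ! Suc u) j" using phi_next_Some(3)[OF rs_next[OF Suc.prems(2)]] by simp
  thus ?case using Suc by (cases "t = u") auto
qed simp

lemma K3: "t < length rs \<Longrightarrow> s \<notin> set rs \<Longrightarrow> rs ! t < s \<Longrightarrow> E (rs ! t) j < E s j
   \<Longrightarrow> E (rs ! t) j < E s (Suc j)"
proof (induction t arbitrary: s)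
  case 0 thus ?case using B0 rs0 by simp
next
  case (Suc t)
  let ?a = "rs ! Suc t" and ?b = "rs ! t"
  note nx = phi_next_Some[OF rs_next[OF Suc.prems(1)]]
  show ?case
  proof (rule ccontr)
    assume "\<not> ?thesis"
    hence le: "E s (Suc j) \<le> E ?a j" by simp
    have bs: "E ?b j < E s (Suc j)"
    proof (cases "s < ?b")
      case True
      from nx(5)[OF Suc.prems(3) True] Suc.prems(4) nx(3) show ?thesis by auto
    next
      case False
      have "s \<noteq> ?b" using Suc.prems(1,2) by auto
      hence "?b < s" using False by simp
      thus ?thesis using Suc.IH[of s] Suc.prems nx(3) by simp
    qed
    have "E s (Suc j) < E ?a (Suc j)"
      using good_T[OF good Suc.prems(3) j1 _ le] bs by simp
    thus False using nx(4) bs by simp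
  qed
qed

lemma K1: assumes "Suc t < length rs" "s \<notin> set rs" "rs ! Suc t < s" "0 < E s j"
   "E s j < E (rs ! Suc t) j"
  shows "E s j < E (rs ! t) j"
proof (rule ccontr)
  let ?a = "rs ! Suc t" and ?b = "rs ! t"
  note nx = phi_next_Some[OF rs_next[OF assms(1)]]
  assume "\<not> ?thesis"
  moreover have "s \<noteq> ?b" using assms(1,2) by auto
  moreover have "0 < E ?b j" using rs_pos assms(1) by simp
  ultimately have bs0: "E ?b j < E s j" using good_distinct[OF good, of s ?b j] good_distinct[OF good, of ?b s j] assms(4)
    by (metis linorder_neqE_nat nat_neq_iff)
  have bs: "E ?b j < E s (Suc j)"
  proof (cases "s < ?b")
    case True
    from nx(5)[OF assms(3) True] bs0 show ?thesis by auto
  next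
    case False
    hence "?b < s" using \<open>s \<noteq> ?b\<close> by simp
    thus ?thesis using K3[of t s] assms bs0 by simp
  qed
  have "E s (Suc j) \<le> E s j" using good_R[OF good j1] by simp
  hence "E s (Suc j) < E ?a (Suc j)"
    using good_T[OF good assms(3) j1, of ] bs assms(5) by simp
  thus False using nx(4) bs by simp
qed

lemma last_eq: "last rs = rs ! (length rs - 1)"
  using rs_ne by (simp add: last_conv_nth)

lemma EXIT: assumes "s \<notin> set rs" "E (last rs) j < E s j"
  shows "E (last rs) j < E s (Suc j)"
proof (cases "s < last rs")
  case True
  have "1 \<le> s" using assms(2) good_pos[OF good, of s j] by (auto simp: box_def)
  from phi_next_None[OF rs_last this True] assms(2) show ?thesis by auto
next
  case False
  have "s \<noteq> last rs" using assms(1) rs_ne by auto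
  hence "last rs < s" using False by simp
  thus ?thesis using K3[of "length rs - 1" s] assms rs_ne last_eq by simp
qed

lemma rs_le_last: "t < length rs \<Longrightarrow> E (rs ! t) j \<le> E (last rs) j"
  using rs_incr[of t "length rs - 1"] last_eq by (cases "t = length rs - 1") (auto simp: less_imp_le)

end




lemma box_cong: "map length U = map length T \<Longrightarrow> box U r c = box T r c"
proof -
  assume h: "map length U = map length T"
  hence "length U = length T" by (metis length_map)
  moreover have "k < length T \<Longrightarrow> length (U ! k) = length (T ! k)" for k
    using h by (metis nth_map \<open>length U = length T\<close>)
  ultimately show ?thesis unfolding box_def
    by (metis (no_types, lifting) Suc_le_eq Suc_pred' le_eq_less_or_eq less_le_trans zero_less_one)
qed

lemma ent_upd: "ent (U[k := row]) r c =
   (if r = Suc k \<and> k < length U then (if 1 \<le> c \<and> c \<le> length row then row ! (c - 1) else 0) else ent U r c)"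
  by (auto simp: ent_def nth_list_update)

lemma fold_upd:
  assumes "distinct (map fst ps)" "\<forall>(a, b)\<in>set ps. box T0 a j"
  shows "map length (fold (\<lambda>(a, b) U. U[a - 1 := (U ! (a - 1))[j - 1 := f b]]) ps T0) = map length T0 \<and>
    (\<forall>r c. ent (fold (\<lambda>(a, b) U. U[a - 1 := (U ! (a - 1))[j - 1 := f b]]) ps T0) r c =
      (if c = j \<and> r \<in> fst ` set ps then f (the (map_of ps r)) else ent T0 r c))"
  using assms
proof (induction ps arbitrary: T0)
  case Nil thus ?case by simp
next
  case (Cons p ps)
  obtain a b where p: "p = (a, b)" by (cases p)
  let ?U = "T0[a - 1 := (T0 ! (a - 1))[j - 1 := f b]]"
  have ba: "box T0 a j" using Cons.prems p by simp
  hence a: "1 \<le> a" "a \<le> length T0" "1 \<le> j" "j \<le> length (T0 ! (a - 1))" by (auto simp: box_def)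
  have mlU: "map length ?U = map length T0"
  proof -
    have "a - 1 < length T0" using a by simp
    hence "(map length T0)[a - 1 := length (T0 ! (a - 1))] = map length T0"
      by (metis list_update_id nth_map length_map)
    thus ?thesis by (simp add: map_update)
  qed
  have entU: "ent ?U r c = (if r = a \<and> c = j then f b else ent T0 r c)" for r c
    using a by (auto simp: ent_upd ent_def nth_list_update)
  have d: "distinct (map fst ps)" "a \<notin> fst ` set ps" using Cons.prems(1) p by auto
  have bx: "\<forall>(a, b)\<in>set ps. box ?U a j" using Cons.prems(2) box_cong[OF mlU] by auto
  note IH = Cons.IH[OF d(1) bx]
  show ?case
  proof (intro conjI allI)
    show "map length (fold (\<lambda>(a, b) U. U[a - 1 := (U ! (a - 1))[j - 1 := f b]]) (p # ps) T0) = map length T0"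
      using IH mlU p by simp
  next
    fix r c
    show "ent (fold (\<lambda>(a, b) U. U[a - 1 := (U ! (a - 1))[j - 1 := f b]]) (p # ps) T0) r c =
      (if c = j \<and> r \<in> fst ` set (p # ps) then f (the (map_of (p # ps) r)) else ent T0 r c)"
      using IH entU p d(2) by auto
  qed
qed

context cctx begin

definition pre where "pre r = the (map_of (zip (tl rs) rs) r)"

lemma zip_fst: "map fst (zip (tl rs) rs) = tl rs"
proof -
  have "length (tl rs) \<le> length rs" by simp
  thus ?thesis by (simp add: map_fst_zip_take)
qed

lemma pre_nth: assumes "Suc t < length rs" shows "pre (rs ! Suc t) = rs ! t"
proof -
  have "distinct (map fst (zip (tl rs) rs))" using zip_fst rs_distinct by (simp add: distinct_tl)
  moreover have "(rs ! Suc t, rs ! t) \<in> set (zip (tl rs) rs)"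
    using assms by (auto simp: set_zip nth_tl intro!: exI[of _ t])
  ultimately show ?thesis unfolding pre_def by (simp add: map_of_is_SomeI)
qed

lemma tl_mem: "r \<in> set (tl rs) \<longleftrightarrow> (\<exists>t. Suc t < length rs \<and> r = rs ! Suc t)"
proof
  assume "r \<in> set (tl rs)"
  then obtain t where "t < length (tl rs)" "r = tl rs ! t" by (auto simp: in_set_conv_nth)
  thus "\<exists>t. Suc t < length rs \<and> r = rs ! Suc t" using rs_ne by (auto simp: nth_tl intro!: exI[of _ t])
next
  assume "\<exists>t. Suc t < length rs \<and> r = rs ! Suc t"
  then obtain t where "Suc t < length rs" "r = rs ! Suc t" by blast
  thus "r \<in> set (tl rs)" by (auto simp: in_set_conv_nth nth_tl intro!: exI[of _ t])
qed

definition T1 where "T1 = fold (\<lambda>(a, b) U. U[a - 1 := (U ! (a - 1))[j - 1 := ent T b j]]) (zip (tl rs) rs) T"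

lemma T1_props: "map length T1 = map length T"
  "ent T1 r c = (if c = j \<and> r \<in> set (tl rs) then E (pre r) j else E r c)"
proof -
  have d: "distinct (map fst (zip (tl rs) rs))" using zip_fst rs_distinct by (simp add: distinct_tl)
  have bx: "\<forall>(a, b)\<in>set (zip (tl rs) rs). box T a j"
  proof
    fix p assume "p \<in> set (zip (tl rs) rs)"
    hence "fst p \<in> set (tl rs)" using zip_fst by (metis image_eqI list.set_map)
    then obtain t where "Suc t < length rs" "fst p = rs ! Suc t" using tl_mem by blast
    hence "box T (fst p) j" using rs_pos good_pos[OF good] by auto
    thus "case p of (a, b) \<Rightarrow> box T a j" by (cases p) auto
  qed
  note F = fold_upd[OF d bx, of "\<lambda>b. ent T b j"]
  show "map length T1 = map length T" using F unfolding T1_def by simp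
  have "fst ` set (zip (tl rs) rs) = set (tl rs)" using zip_fst by (metis list.set_map)
  thus "ent T1 r c = (if c = j \<and> r \<in> set (tl rs) then E (pre r) j else E r c)"
    using F unfolding T1_def pre_def by simp
qed

lemma phi_unfold: "phi j T = (let row' = butlast (T1 ! (r1 - 1)) in
   (if row' = [] then take (r1 - 1) T1 @ drop r1 T1 else T1[r1 - 1 := row'], E (last rs) j))"
  unfolding phi_def Let_def r1_def[symmetric] rs_def[symmetric] T1_def[symmetric] by simp

lemma T1_row_len: "length (T1 ! (r1 - 1)) = j"
proof -
  have "r1 - 1 < length T" using r1_mem by auto
  thus ?thesis using T1_props(1) r1_mem by (metis nth_map length_map)
qed

end



lemma good_intro:
  assumes A1: "\<And>r. 1 \<le> r \<Longrightarrow> r \<le> length V \<Longrightarrow> box V r 1"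
    and A2: "\<And>r c. box V r c \<Longrightarrow> 0 < ent V r c"
    and R: "\<And>r c. 1 \<le> c \<Longrightarrow> ent V r (Suc c) \<le> ent V r c"
    and F: "\<And>r s. 1 \<le> r \<Longrightarrow> r < s \<Longrightarrow> 0 < ent V s 1 \<Longrightarrow> ent V r 1 < ent V s 1"
    and TT: "\<And>r s c. r < s \<Longrightarrow> 1 \<le> c \<Longrightarrow> 0 < ent V s (Suc c) \<Longrightarrow> ent V s (Suc c) \<le> ent V r c
       \<Longrightarrow> ent V s (Suc c) < ent V r (Suc c)"
  shows "good V"
proof -
  have "\<forall>row\<in>set V. row \<noteq> [] \<and> (\<forall>x\<in>set row. 0 < x)"
  proof
    fix row assume "row \<in> set V"
    then obtain k where k: "k < length V" "row = V ! k" by (auto simp: in_set_conv_nth)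
    have "box V (Suc k) 1" using A1[of "Suc k"] k by simp
    hence "row \<noteq> []" using k by (auto simp: box_def)
    moreover have "\<forall>x\<in>set row. 0 < x"
    proof
      fix x assume "x \<in> set row"
      then obtain m where m: "m < length row" "x = row ! m" by (auto simp: in_set_conv_nth)
      have "box V (Suc k) (Suc m)" using k m by (simp add: box_def)
      from A2[OF this] show "0 < x" using k m by (simp add: ent_box box_def)
    qed
    ultimately show "row \<noteq> [] \<and> (\<forall>x\<in>set row. 0 < x)" by simp
  qed
  moreover have "\<forall>r c. 1 \<le> c \<longrightarrow> ent V r (Suc c) \<le> ent V r c" using R by blast
  moreover have "\<forall>r s. 1 \<le> r \<and> r < s \<and> 0 < ent V s 1 \<longrightarrow> ent V r 1 < ent V s 1" using F by blast
  moreover have "\<forall>r s c. r < s \<and> 1 \<le> c \<and> 0 < ent V s (Suc c) \<and> ent V s (Suc c) \<le> ent V r c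
       \<longrightarrow> ent V s (Suc c) < ent V r (Suc c)" using TT by blast
  ultimately show ?thesis unfolding good_def by blast
qed

context cctx begin

definition V where "V = fst (phi j T)"
definition x where "x = snd (phi j T)"

lemma x_eq: "x = E (last rs) j"
  unfolding x_def phi_unfold by (simp add: Let_def)

lemma x_pos: "0 < x"
  using rs_pos[of "length rs - 1"] rs_ne last_eq x_eq by simp

lemma rs_cons: "rs = r1 # tl rs"
  using rs_ne rs0 by (cases rs) auto

lemma r1_notin_tl: "r1 \<notin> set (tl rs)"
  using rs_distinct rs_cons by (metis distinct.simps(2))

lemma rs_cases: "r \<in> set rs \<longleftrightarrow> r = r1 \<or> r \<in> set (tl rs)"
  using rs_cons by (metis set_ConsD list.set_intros)

lemma V_j2: "2 \<le> j \<Longrightarrow> V = T1[r1 - 1 := butlast (T1 ! (r1 - 1))]"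
proof -
  assume j2: "2 \<le> j"
  have "length (butlast (T1 ! (r1 - 1))) = j - 1" using T1_row_len by simp
  hence "butlast (T1 ! (r1 - 1)) \<noteq> []" using j2 by (metis list.size(3) diff_is_0_eq not_numeral_le_zero le_trans One_nat_def one_le_numeral nat_le_linear Suc_1 not_less_eq_eq)
  thus ?thesis unfolding V_def phi_unfold by (simp add: Let_def)
qed

lemma mlV: "2 \<le> j \<Longrightarrow> map length V = (map length T)[r1 - 1 := j - 1]"
  using V_j2 T1_props(1) T1_row_len by (simp add: map_update)

lemma EV: assumes j2: "2 \<le> j"
  shows "ent V r c = (if c = j then (if r = r1 then 0 else if r \<in> set (tl rs) then E (pre r) j else E r j) else E r c)"
proof -
  have "length T1 = length T" using T1_props(1) by (metis length_map)
  hence k: "r1 - 1 < length T1" using r1_mem by (cases r1) auto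
  have "ent V r c = (if r = r1 \<and> c = j then 0 else ent T1 r c)"
  proof (cases "r = r1")
    case True
    define row where "row = T1 ! (r1 - 1)"
    have lr: "length row = j" using T1_row_len row_def by simp
    have "ent V r1 c = (if 1 \<le> c \<and> c \<le> j - 1 then row ! (c - 1) else 0)"
    proof -
      have "r1 = Suc (r1 - 1)" using r1_mem by simp
      hence "ent V r1 c = (if 1 \<le> c \<and> c \<le> length (butlast row) then butlast row ! (c - 1) else 0)"
        using V_j2[OF j2] k unfolding row_def by (metis ent_upd)
      thus ?thesis using lr by (auto simp: nth_butlast)
    qed
    moreover have "ent T1 r1 c = (if 1 \<le> c \<and> c \<le> j then row ! (c - 1) else 0)"
      using lr k r1_mem unfolding row_def ent_def by auto
    ultimately show ?thesis using True by auto
  next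
    case False
    hence "r \<noteq> Suc (r1 - 1)" using r1_mem by simp
    thus ?thesis using V_j2[OF j2] False by (simp add: ent_upd)
  qed
  thus ?thesis using T1_props(2) r1_notin_tl by auto
qed

lemma pre_lt: "r \<in> set (tl rs) \<Longrightarrow> E (pre r) j < E r j \<and> r < pre r \<and> E r (Suc j) \<le> E (pre r) j
   \<and> pre r \<in> set rs"
proof -
  assume "r \<in> set (tl rs)"
  then obtain t where t: "Suc t < length rs" "r = rs ! Suc t" using tl_mem by blast
  note nx = phi_next_Some[OF rs_next[OF t(1)]]
  show ?thesis using nx t pre_nth[OF t(1)] by auto
qed

lemma EV_le: "2 \<le> j \<Longrightarrow> ent V r c \<le> E r c"
  using EV pre_lt by (auto simp: less_imp_le)

lemma good_V_j2: assumes j2: "2 \<le> j" shows "good V"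
proof (rule good_intro)
  have boxV: "box V r c \<longleftrightarrow> box T r c \<and> \<not> (r = r1 \<and> c = j)" for r c
  proof -
    have lV: "length V = length T" using mlV[OF j2] by (metis length_map length_list_update)
    have lk: "k < length T \<Longrightarrow> length (V ! k) = (if k = r1 - 1 then j - 1 else length (T ! k))" for k
    proof -
      assume "k < length T"
      hence "length (V ! k) = map length V ! k" using lV by simp
      also have "\<dots> = (if k = r1 - 1 then j - 1 else length (T ! k))"
        using mlV[OF j2] \<open>k < length T\<close> by (simp add: nth_list_update)
      finally show ?thesis .
    qed
    show ?thesis
    proof (cases "1 \<le> r \<and> r \<le> length T")
      case True
      hence "r - 1 < length T" by (cases r) auto
      note L = lk[OF this]
      show ?thesis
      proof (cases "r = r1")
        case True thus ?thesis using L lV r1_mem unfolding box_def by auto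
      next
        case False
        hence "r - 1 \<noteq> r1 - 1" using r1_mem \<open>1 \<le> r \<and> r \<le> length T\<close> by auto
        thus ?thesis using L lV False unfolding box_def by auto
      qed
    next
      case False thus ?thesis using lV unfolding box_def by auto
    qed
  qed
  show "box V r 1" if "1 \<le> r" "r \<le> length V" for r
  proof -
    have "length V = length T" using mlV[OF j2] by (metis length_map length_list_update)
    hence "r - 1 < length T" using that by simp
    hence "T ! (r - 1) \<noteq> []" using good unfolding good_def by (meson nth_mem)
    hence "box T r 1" using that \<open>length V = length T\<close> by (auto simp: box_def Suc_le_eq)
    thus ?thesis using boxV j2 by simp
  qed
  show "0 < ent V r c" if "box V r c" for r c
  proof -
    have bt: "box T r c" and nr: "\<not> (r = r1 \<and> c = j)" using that boxV by auto
    have et: "0 < E r c" using bt good_pos[OF good] by blast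
    show ?thesis
    proof (cases "c = j \<and> r \<in> set (tl rs)")
      case True
      then obtain t where t: "Suc t < length rs" "r = rs ! Suc t" using tl_mem by blast
      thus ?thesis using True EV[OF j2] rs_pos[of t] pre_nth[OF t(1)] r1_notin_tl by auto
    next
      case False thus ?thesis using EV[OF j2] et nr by auto
    qed
  qed
  show "ent V r (Suc c) \<le> ent V r c" if c1: "1 \<le> c" for r c
  proof -
    consider "Suc c = j" | "c = j" | "Suc c \<noteq> j \<and> c \<noteq> j" by blast
    thus ?thesis
    proof cases
      case 1
      have "ent V r (Suc c) \<le> E r (Suc c)" using EV_le[OF j2] by blast
      also have "\<dots> \<le> E r c" using good_R[OF good c1] by blast
      also have "\<dots> = ent V r c" using EV[OF j2] 1 by simp
      finally show ?thesis .
    next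
      case 2
      have "ent V r (Suc c) = E r (Suc j)" using EV[OF j2] 2 by simp
      moreover have "E r (Suc j) \<le> ent V r j"
        using EV[OF j2, of r j] E_r1 pre_lt[of r] good_R[OF good j1, of r] by auto
      ultimately show ?thesis using 2 by simp
    next
      case 3 thus ?thesis using EV[OF j2] good_R[OF good c1] by simp
    qed
  qed
  show "ent V r 1 < ent V s 1" if "1 \<le> r" "r < s" "0 < ent V s 1" for r s
    using that EV[OF j2] good_F[OF good] j2 by simp
  show "ent V s (Suc c) < ent V r (Suc c)"
    if h: "r < s" "1 \<le> c" "0 < ent V s (Suc c)" "ent V s (Suc c) \<le> ent V r c" for r s c
  proof -
    consider "Suc c = j" | "c = j" | "Suc c \<noteq> j \<and> c \<noteq> j" by blast
    thus ?thesis
    proof cases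
      case 3 thus ?thesis using h EV[OF j2] good_T[OF good h(1,2)] by simp
    next
      case 2
      have "ent V r c \<le> E r c" using EV_le[OF j2] by blast
      thus ?thesis using h EV[OF j2] good_T[OF good h(1,2)] 2 by simp
    next
      case 1
      have Vrc: "ent V r c = E r c" using EV[OF j2] 1 by simp
      show ?thesis
      proof (cases "s = r1")
        case True thus ?thesis using h(3) EV[OF j2] 1 by simp
      next
        case sn: False
        show ?thesis
        proof (cases "s \<in> set (tl rs)")
          case True
          then obtain u where u: "Suc u < length rs" "s = rs ! Suc u" using tl_mem by blast
          have Vs: "ent V s (Suc c) = E (rs ! u) j" using EV[OF j2] 1 sn True pre_nth[OF u(1)] u by simp
          have rlt: "r < rs ! u" using h(1) rs_lt[of u "Suc u"] u by simp
          have "E (rs ! u) j < E r j"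
            using good_T[OF good rlt h(2)] h(3,4) Vs Vrc 1 by simp
          show ?thesis
          proof (cases "r \<in> set (tl rs)")
            case True
            then obtain t where t: "Suc t < length rs" "r = rs ! Suc t" using tl_mem by blast
            have "Suc u < Suc t"
            proof (rule ccontr)
              assume "\<not> Suc u < Suc t"
              hence "Suc t \<le> Suc u" by simp
              hence "s \<le> r" using u t rs_lt[of "Suc t" "Suc u"] by (cases "Suc t = Suc u") auto
              thus False using h(1) by simp
            qed
            hence "E (rs ! u) j < E (rs ! t) j" using rs_incr[of u t] t by simp
            moreover have "r \<noteq> r1" using True r1_notin_tl by auto
            ultimately show ?thesis using Vs EV[OF j2] 1 True pre_nth[OF t(1)] t by simp
          next
            case False
            have "r \<noteq> r1"
            proof
              assume "r = r1"
              hence "s < r" using u rs_lt[of 0 "Suc u"] rs0 by simp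
              thus False using h(1) by simp
            qed
            thus ?thesis using Vs EV[OF j2] 1 False \<open>E (rs ! u) j < E r j\<close> by simp
          qed
        next
          case sno: False
          have Vs: "ent V s (Suc c) = E s j" using EV[OF j2] 1 sn sno by simp
          have sr: "s \<notin> set rs" using sn sno rs_cases by simp
          have lt: "E s j < E r j" using good_T[OF good h(1,2)] h(3,4) Vs Vrc 1 by simp
          show ?thesis
          proof (cases "r = r1")
            case True
            have "E r1 j < E s (Suc j)" using B0 h(1) True h(3) Vs by simp
            moreover have "E s (Suc j) \<le> E s j" using good_R[OF good j1] by simp
            ultimately show ?thesis using lt True by simp
          next
            case rn: False
            show ?thesis
            proof (cases "r \<in> set (tl rs)")
              case True
              then obtain t where t: "Suc t < length rs" "r = rs ! Suc t" using tl_mem by blast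
              have "E s j < E (rs ! t) j" using K1[OF t(1) sr] t h(1) h(3) Vs lt by simp
              thus ?thesis using EV[OF j2] 1 rn True pre_nth[OF t(1)] t Vs by simp
            next
              case False thus ?thesis using EV[OF j2] 1 rn lt Vs by simp
            qed
          qed
        qed
      qed
    qed
  qed
qed

end



lemma ent_del: assumes "k < length T"
  shows "ent (take k T @ drop (Suc k) T) r c = ent T (if r \<le> k then r else Suc r) c"
proof -
  let ?V = "take k T @ drop (Suc k) T"
  have lV: "length ?V = length T - 1" using assms by simp
  show ?thesis
  proof (cases "r \<le> k")
    case True
    show ?thesis
    proof (cases "1 \<le> r")
      case r1: True
      have "r - 1 < length (take k T)" using True r1 assms by simp
      hence "?V ! (r - 1) = T ! (r - 1)" by (simp add: nth_append)
      thus ?thesis using True r1 assms lV unfolding ent_def by auto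
    next
      case False thus ?thesis by (simp add: ent_def)
    qed
  next
    case False
    show ?thesis
    proof (cases "r \<le> length ?V")
      case True
      have l: "length (take k T) = k" using assms by simp
      have "\<not> r - 1 < k" using False by simp
      hence "?V ! (r - 1) = drop (Suc k) T ! (r - 1 - k)" using l by (simp add: nth_append)
      also have "\<dots> = T ! (Suc k + (r - 1 - k))" using True lV assms by (simp add: nth_drop)
      also have "Suc k + (r - 1 - k) = r" using False by simp
      finally have "?V ! (r - 1) = T ! r" .
      thus ?thesis using False True assms lV unfolding ent_def by auto
    next
      case c: False
      thus ?thesis using False lV assms unfolding ent_def by auto
    qed
  qed
qed

lemma good_del: assumes g: "good T" and k: "k < length T"
  shows "good (take k T @ drop (Suc k) T)"
proof -
  let ?V = "take k T @ drop (Suc k) T"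
  define g where "g r = (if r \<le> k then r else Suc r)" for r
  have e: "ent ?V r c = ent T (g r) c" for r c using ent_del[OF k] g_def by simp
  have mono: "r < s \<Longrightarrow> g r < g s" for r s by (auto simp: g_def)
  have A: "\<forall>row\<in>set ?V. row \<noteq> [] \<and> (\<forall>x\<in>set row. 0 < x)"
  proof -
    have "set ?V \<subseteq> set T" using set_take_subset[of k T] set_drop_subset[of "Suc k" T] by auto
    thus ?thesis using g unfolding good_def by blast
  qed
  have R: "\<forall>r c. 1 \<le> c \<longrightarrow> ent ?V r (Suc c) \<le> ent ?V r c" using good_R[OF g] e by simp
  have F: "\<forall>r s. 1 \<le> r \<and> r < s \<and> 0 < ent ?V s 1 \<longrightarrow> ent ?V r 1 < ent ?V s 1"
  proof (intro allI impI)
    fix r s assume h: "1 \<le> r \<and> r < s \<and> 0 < ent ?V s 1"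
    have g1: "1 \<le> g r" using h by (auto simp: g_def)
    show "ent ?V r 1 < ent ?V s 1" using good_F[OF assms(1) g1 mono[of r s]] h e by simp
  qed
  have TT: "\<forall>r s c. r < s \<and> 1 \<le> c \<and> 0 < ent ?V s (Suc c) \<and> ent ?V s (Suc c) \<le> ent ?V r c
       \<longrightarrow> ent ?V s (Suc c) < ent ?V r (Suc c)"
    using good_T[OF g mono] e by simp
  show ?thesis unfolding good_def using A R F TT by blast
qed

definition Pc :: "nat list list \<Rightarrow> nat \<Rightarrow> nat \<Rightarrow> bool" where
  "Pc T c y \<longleftrightarrow> (\<forall>r. 0 < ent T r c \<and> y \<le> ent T r c \<longrightarrow> y < ent T r (Suc c))"

context cctx begin

lemma greatest_r1: "(GREATEST k. k < length (map length T) \<and> map length T ! k = j) = r1 - 1"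
proof (rule Greatest_equality)
  show "r1 - 1 < length (map length T) \<and> map length T ! (r1 - 1) = j"
    using r1_mem by (cases r1) auto
  fix y assume h: "y < length (map length T) \<and> map length T ! y = j"
  hence "length (T ! y) = j" using nth_map[of y T length] by simp
  hence "Suc y \<le> r1" using r1_max[of "Suc y"] h by simp
  thus "y \<le> r1 - 1" by simp
qed

lemma V_shape_j2: "2 \<le> j \<Longrightarrow> map length V = dop j (map length T)"
  using mlV jin greatest_r1 unfolding dop_def by (simp add: Let_def)

lemma rs_j1: assumes "j = 1" shows "rs = [r1]"
proof -
  have "phi_next T j r1 = None"
  proof (rule ccontr)
    assume "phi_next T j r1 \<noteq> None"
    then obtain r' where "phi_next T j r1 = Some r'" by blast
    note s = phi_next_Some[OF this]
    have "E r' 1 < E r1 1" using good_F[OF good s(1) s(2)] E_r1 assms by simp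
    thus False using s(3) assms by simp
  qed
  moreover obtain n where "r1 = Suc n" using r1_mem by (cases r1) auto
  ultimately show ?thesis unfolding rs_def by simp
qed

lemma V_j1: assumes "j = 1" shows "V = take (r1 - 1) T @ drop r1 T"
proof -
  have "tl rs = []" using rs_j1[OF assms] by simp
  hence "T1 = T" unfolding T1_def by simp
  moreover have "butlast (T1 ! (r1 - 1)) = []" using T1_row_len assms
    by (metis length_butlast length_0_conv diff_self_eq_0)
  ultimately show ?thesis unfolding V_def phi_unfold by (simp add: Let_def)
qed

lemma k1: "r1 - 1 < length T" using r1_mem by (cases r1) auto

lemma EV1: "j = 1 \<Longrightarrow> ent V r c = E (if r < r1 then r else Suc r) c"
proof -
  assume j: "j = 1"
  have "ent V r c = E (if r \<le> r1 - 1 then r else Suc r) c"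
    using V_j1[OF j] ent_del[OF k1] r1_mem by (cases r1) auto
  moreover have "(r \<le> r1 - 1) = (r < r1)" using r1_mem by auto
  ultimately show ?thesis by simp
qed

lemma good_V: "good V"
proof (cases "j = 1")
  case True
  thus ?thesis using V_j1 good_del[OF good k1] r1_mem by (cases r1) auto
next
  case False thus ?thesis using good_V_j2 j1 by simp
qed

lemma V_shape: "map length V = dop j (map length T)"
proof (cases "j = 1")
  case True
  have "map length V = take (r1 - 1) (map length T) @ drop (Suc (r1 - 1)) (map length T)"
    using V_j1[OF True] r1_mem by (simp add: take_map drop_map)
  thus ?thesis using jin greatest_r1 True unfolding dop_def by (simp add: Let_def)
next
  case False thus ?thesis using V_shape_j2 j1 by simp
qed

lemma Pc_V: "Pc V j x"
  unfolding Pc_def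
proof (intro allI impI)
  fix r assume h: "0 < ent V r j \<and> x \<le> ent V r j"
  show "x < ent V r (Suc j)"
  proof (cases "j = 1")
    case True
    define q where "q = (if r < r1 then r else Suc r)"
    have eq: "ent V r c = E q c" for c using EV1[OF True] q_def by simp
    have qn: "q \<noteq> r1" by (auto simp: q_def)
    have rs1: "rs = [r1]" using rs_j1[OF True] .
    have xe: "x = E r1 j" using x_eq rs1 by simp
    have "E q j \<noteq> E r1 j"
      using good_distinct[OF good, of q r1 j] good_distinct[OF good, of r1 q j] qn h eq E_r1
      by (metis nat_neq_iff)
    hence "E (last rs) j < E q j" using h eq xe rs1 by simp
    moreover have "q \<notin> set rs" using qn rs1 by simp
    ultimately show ?thesis using EXIT xe rs1 eq by simp
  next
    case False
    hence j2: "2 \<le> j" using j1 by simp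
    have rn: "r \<noteq> r1" using h EV[OF j2] by auto
    have rt: "r \<notin> set (tl rs)"
    proof
      assume "r \<in> set (tl rs)"
      then obtain t where t: "Suc t < length rs" "r = rs ! Suc t" using tl_mem by blast
      have "ent V r j = E (rs ! t) j" using EV[OF j2] rn \<open>r \<in> set (tl rs)\<close> pre_nth[OF t(1)] t by simp
      moreover have "E (rs ! t) j < E (rs ! Suc t) j" using rs_incr t by simp
      moreover have "E (rs ! Suc t) j \<le> x" using rs_le_last[OF t(1)] x_eq by simp
      ultimately show False using h by simp
    qed
    have Vr: "ent V r j = E r j" using EV[OF j2] rn rt by simp
    have "r \<noteq> last rs" using rn rt rs_cons by (metis last_in_set rs_ne set_ConsD)
    moreover have "0 < E (last rs) j" using x_pos x_eq by simp
    ultimately have "E r j \<noteq> E (last rs) j"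
      using good_distinct[OF good, of r "last rs" j] good_distinct[OF good, of "last rs" r j] h Vr
      by (metis nat_neq_iff)
    hence "E (last rs) j < E r j" using h Vr x_eq by simp
    moreover have "r \<notin> set rs" using rn rt rs_cases by simp
    ultimately have "x < E r (Suc j)" using EXIT x_eq by simp
    thus ?thesis using EV[OF j2] by simp
  qed
qed

lemma Pc_pres: assumes "j < c" "Pc T c y" shows "Pc V c y"
proof (cases "j = 1")
  case True
  thus ?thesis using assms EV1[OF True] unfolding Pc_def by simp
next
  case False
  hence j2: "2 \<le> j" using j1 by simp
  thus ?thesis using assms EV[OF j2] unfolding Pc_def by simp
qed

lemma jm1_in: "2 \<le> j \<Longrightarrow> j - 1 \<in> set (map length V)"
proof -
  assume j2: "2 \<le> j"
  have "r1 - 1 < length (map length V)" using mlV[OF j2] k1 by simp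
  moreover have "map length V ! (r1 - 1) = j - 1" using mlV[OF j2] k1 by simp
  ultimately show ?thesis by (metis nth_mem)
qed

end

lemma cctx_V: assumes c: "cctx T j" and j2: "2 \<le> j" shows "cctx (cctx.V T j) (j - 1)"
proof -
  have "good (cctx.V T j)" by (rule cctx.good_V[OF c])
  moreover have "j - 1 \<in> set (map length (cctx.V T j))" by (rule cctx.jm1_in[OF c j2])
  ultimately show ?thesis unfolding cctx_def using j2 by simp
qed

lemma (in cctx) L3: assumes j2: "2 \<le> j" shows "x \<le> cctx.x V (j - 1)"
proof -
  interpret W: cctx V "j - 1" using cctx_V[OF _ j2] cctx_axioms by simp
  let ?x' = "W.x"
  have jj: "j - 1 \<noteq> j" using j2 by simp
  have inW: "q \<in> set W.rs \<Longrightarrow> ent V q (j - 1) \<le> ?x'" for q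
    using W.rs_le_last W.x_eq by (metis in_set_conv_nth)
  have key: "t < length rs \<Longrightarrow> ?x' < E (rs ! t) j \<Longrightarrow> False" for t
  proof (induction t)
    case 0
    have q: "rs ! 0 = r1" using rs0 .
    have "E r1 j \<le> E r1 (j - 1)" using good_R'[OF good, of "j - 1" j r1] j2 by simp
    hence v1: "ent V r1 (j - 1) > ?x'" using 0 q EV[OF j2, of r1 "j - 1"] jj by simp
    hence "r1 \<notin> set W.rs" using inW by force
    with W.EXIT[of r1] v1 W.x_eq have "?x' < ent V r1 (Suc (j - 1))" by simp
    thus False using EV[OF j2, of r1 j] j2 by simp
  next
    case (Suc t)
    let ?q = "rs ! Suc t"
    have "E ?q j \<le> E ?q (j - 1)" using good_R'[OF good, of "j - 1" j ?q] j2 by simp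
    hence v1: "ent V ?q (j - 1) > ?x'" using Suc.prems EV[OF j2, of ?q "j - 1"] jj by simp
    hence "?q \<notin> set W.rs" using inW by force
    with W.EXIT[of ?q] v1 W.x_eq have gt: "?x' < ent V ?q (Suc (j - 1))" by simp
    have qt: "?q \<in> set (tl rs)" using tl_mem Suc.prems(1) by blast
    have qn: "?q \<noteq> r1" using qt r1_notin_tl by auto
    have "ent V ?q j = E (rs ! t) j" using EV[OF j2] qt qn pre_nth[OF Suc.prems(1)] by simp
    hence "?x' < E (rs ! t) j" using gt j2 by simp
    thus False using Suc.IH Suc.prems by simp
  qed
  show ?thesis
  proof (rule ccontr)
    assume "\<not> ?thesis"
    hence "?x' < E (rs ! (length rs - 1)) j" using x_eq last_eq by simp
    thus False using key[of "length rs - 1"] rs_ne by simp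
  qed
qed




lemma phi_V: "cctx U j \<Longrightarrow> phi j U = (cctx.V U j, cctx.x U j)"
  by (simp add: cctx.V_def cctx.x_def)

lemma mu_aux_main:
  "good U \<Longrightarrow> (m = 0 \<or> m \<in> set (map length U)) \<Longrightarrow>
   good (fst (mu_aux m U)) \<and> map length (fst (mu_aux m U)) = vop m (map length U)
   \<and> length (snd (mu_aux m U)) = m \<and> sorted (snd (mu_aux m U)) \<and> (\<forall>h\<in>set (snd (mu_aux m U)). 0 < h)
   \<and> (\<forall>c. 1 \<le> c \<and> c \<le> m \<longrightarrow> Pc (fst (mu_aux m U)) c (snd (mu_aux m U) ! (m - c)))
   \<and> (\<forall>c y. m < c \<longrightarrow> Pc U c y \<longrightarrow> Pc (fst (mu_aux m U)) c y)
   \<and> (1 \<le> m \<longrightarrow> hd (snd (mu_aux m U)) = snd (phi m U))"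
proof (induction m arbitrary: U)
  case 0 thus ?case by simp
next
  case (Suc m)
  have cc: "cctx U (Suc m)" unfolding cctx_def using Suc.prems by simp
  interpret cctx U "Suc m" by (rule cc)
  have ph: "phi (Suc m) U = (V, x)" using phi_V[OF cc] .
  have mu: "mu_aux (Suc m) U = (fst (mu_aux m V), x # snd (mu_aux m V))"
    using ph by (simp add: case_prod_beta)
  have pm: "m = 0 \<or> m \<in> set (map length V)"
    using jm1_in by (cases m) auto
  note IH = Suc.IH[OF good_V pm]
  let ?T' = "fst (mu_aux m V)" and ?H = "snd (mu_aux m V)"
  have sortH: "sorted (x # ?H)"
  proof (cases m)
    case 0 thus ?thesis using IH by simp
  next
    case (Suc m')
    have "x \<le> cctx.x V m" using L3 Suc by simp
    moreover have "cctx V m" using cctx_V[OF cc] Suc by simp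
    hence "snd (phi m V) = cctx.x V m" using phi_V by simp
    ultimately have "x \<le> hd ?H" using IH Suc by simp
    moreover have "?H \<noteq> []" using IH Suc by auto
    ultimately show ?thesis using IH by (cases ?H) auto
  qed
  show ?case
  proof (intro conjI allI impI)
    show "good (fst (mu_aux (Suc m) U))" using IH mu by simp
    show "map length (fst (mu_aux (Suc m) U)) = vop (Suc m) (map length U)"
      using IH mu V_shape by simp
    show "length (snd (mu_aux (Suc m) U)) = Suc m" using IH mu by simp
    show "sorted (snd (mu_aux (Suc m) U))" using sortH mu by simp
    show "\<forall>h\<in>set (snd (mu_aux (Suc m) U)). 0 < h" using IH mu x_pos by simp
    show "hd (snd (mu_aux (Suc m) U)) = snd (phi (Suc m) U)" using mu ph by simp
  next
    fix c assume c: "1 \<le> c \<and> c \<le> Suc m"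
    show "Pc (fst (mu_aux (Suc m) U)) c (snd (mu_aux (Suc m) U) ! (Suc m - c))"
    proof (cases "c = Suc m")
      case True
      have "Pc ?T' (Suc m) x" using IH Pc_V by simp
      thus ?thesis using True mu by simp
    next
      case False
      hence "c \<le> m" using c by simp
      hence "Suc m - c = Suc (m - c)" by simp
      thus ?thesis using IH c False mu by simp
    qed
  next
    fix c y assume "Suc m < c" "Pc U c y"
    hence "Pc V c y" using Pc_pres by simp
    thus "Pc (fst (mu_aux (Suc m) U)) c y" using IH \<open>Suc m < c\<close> mu by simp
  qed
qed




lemma ent_app: "ent (A @ [row]) r c =
   (if r \<le> length A then ent A r c else if r = Suc (length A) \<and> 1 \<le> c \<and> c \<le> length row then row ! (c - 1) else 0)"
  by (auto simp: ent_def nth_append)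

lemma addable_m: assumes "2 \<le> i" "addable_in_col (sorted_partition \<alpha>) i"
  shows "i - 1 \<in> set \<alpha>"
proof -
  obtain k where k: "1 \<le> k" "partval (sorted_partition \<alpha>) k = i - 1"
    using assms(2) unfolding addable_in_col_def by blast
  have "1 \<le> k \<and> k \<le> length (sorted_partition \<alpha>)" using k assms(1) unfolding partval_def
    by (cases "1 \<le> k \<and> k \<le> length (sorted_partition \<alpha>)") auto
  hence "sorted_partition \<alpha> ! (k - 1) = i - 1" "k - 1 < length (sorted_partition \<alpha>)"
    using k unfolding partval_def by auto
  hence "i - 1 \<in> set (sorted_partition \<alpha>)" by (metis nth_mem)
  thus ?thesis by (simp add: sorted_partition_def)
qed

theorem theorem6p24:
  fixes i :: nat and \<alpha> :: "nat list" and T :: "nat list list"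
  assumes "1 \<le> i"
    and "ssrct \<alpha> [] T"
    and "addable_in_col (sorted_partition \<alpha>) i"
  shows "ssrct (uop i \<alpha>) [1] (mu i T)"
proof -
  have al: "\<alpha> = map length T" and gT: "good T" using ss_good[OF assms(2)] by auto
  define m where "m = i - 1"
  have im: "i = Suc m" using assms(1) m_def by simp
  have pm: "m = 0 \<or> m \<in> set (map length T)"
    using addable_m[OF _ assms(3)] al m_def by (cases "2 \<le> i") auto
  note M = mu_aux_main[OF gT pm]
  define T' where "T' = fst (mu_aux m T)"
  define H where "H = snd (mu_aux m T)"
  have gT': "good T'" and shT': "map length T' = vop m \<alpha>" and lH: "length H = m"
    and sH: "sorted H" and pH: "\<forall>h\<in>set H. 0 < h"
    and PcH: "\<And>c. 1 \<le> c \<Longrightarrow> c \<le> m \<Longrightarrow> Pc T' c (H ! (m - c))"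
    using M al unfolding T'_def H_def by auto
  define row where "row = 0 # rev H"
  have mua: "mu_aux (i - 1) T = (T', H)" by (simp add: T'_def H_def m_def)
  have muT: "mu i T = T' @ [row]"
    unfolding mu_def row_def using mua sorted_sort_id[OF sH] by simp
  have up: "uop i \<alpha> = map length T' @ [i]" using shT' m_def by (simp add: uop_def aop_def)
  define n where "n = length T'"
  define \<gamma> where "\<gamma> = map length T' @ [i]"
  have lrow: "length row = i" using lH im row_def by simp
  have lg: "length \<gamma> = Suc n" by (simp add: \<gamma>_def n_def)
  have rowe: "2 \<le> c \<Longrightarrow> c \<le> i \<Longrightarrow> row ! (c - 1) = H ! (i - c)" for c
  proof -
    assume c: "2 \<le> c" "c \<le> i"
    have "c - 1 = Suc (c - 2)" using c by simp
    hence "row ! (c - 1) = rev H ! (c - 2)" using row_def by simp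
    also have "\<dots> = H ! (length H - Suc (c - 2))" using c lH im by (simp add: rev_nth)
    also have "length H - Suc (c - 2) = i - c" using c lH im by simp
    finally show ?thesis .
  qed
  have E: "ent (T' @ [row]) r c =
     (if r \<le> n then ent T' r c else if r = Suc n \<and> 2 \<le> c \<and> c \<le> i then H ! (i - c) else 0)" for r c
  proof -
    have "r = Suc n \<Longrightarrow> c = 1 \<Longrightarrow> row ! (c - 1) = 0" by (simp add: row_def)
    thus ?thesis using rowe lrow unfolding ent_app n_def
      by (cases "c = 1") (auto simp: not_less_eq_eq)
  qed
  have inn: "inner \<gamma> [1] r c \<longleftrightarrow> r = Suc n \<and> c = 1" for r c
    using lg unfolding inner_def by auto
  have ishape: "in_shape \<gamma> r c \<longleftrightarrow> (r \<le> n \<and> box T' r c) \<or> (r = Suc n \<and> 1 \<le> c \<and> c \<le> i)" for r c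
  proof (cases "r \<le> n")
    case True
    thus ?thesis unfolding in_shape_def box_def \<gamma>_def n_def
      by (cases r) (auto simp: nth_append)
  next
    case False thus ?thesis unfolding in_shape_def box_def \<gamma>_def n_def
      by (auto simp: nth_append)
  qed
  have fill: "filled \<gamma> [1] r c \<longleftrightarrow> (r \<le> n \<and> box T' r c) \<or> (r = Suc n \<and> 2 \<le> c \<and> c \<le> i)" for r c
    unfolding filled_def ishape inn by auto
  have bp: "box T' r c \<longleftrightarrow> 0 < ent T' r c" for r c using good_pos[OF gT'] by simp
  have Hpos: "2 \<le> c \<Longrightarrow> c \<le> i \<Longrightarrow> 0 < H ! (i - c)" for c
    using pH lH im by (simp add: nth_mem)
  have comp: "is_comp \<gamma>"
  proof -
    have "\<forall>row\<in>set T'. row \<noteq> []" using gT' unfolding good_def by blast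
    thus ?thesis unfolding is_comp_def \<gamma>_def using assms(1) by auto
  qed
  show ?thesis
    unfolding muT up \<gamma>_def[symmetric] ssrct_def
  proof (intro conjI allI impI)
    show "is_comp \<gamma>" by (rule comp)
    show "is_comp [1]" by (simp add: is_comp_def)
    show "length [1] \<le> length \<gamma>" using lg by simp
    show "map length (T' @ [row]) = \<gamma>" using lrow \<gamma>_def by simp
  next
    fix k assume "k < length [1::nat]"
    thus "[1::nat] ! k \<le> \<gamma> ! (length \<gamma> - length [1::nat] + k)"
      using assms(1) lg by (simp add: \<gamma>_def nth_append n_def)
  next
    fix r c assume "filled \<gamma> [1] r c"
    thus "0 < ent (T' @ [row]) r c" unfolding fill E using bp Hpos by auto
  next
    fix r c assume h: "filled \<gamma> [1] r c \<and> filled \<gamma> [1] r (c + 1)"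
    show "ent (T' @ [row]) r (c + 1) \<le> ent (T' @ [row]) r c"
    proof (cases "r \<le> n")
      case True
      hence "1 \<le> c" using h unfolding fill box_def by auto
      thus ?thesis using True E good_R[OF gT'] by simp
    next
      case False
      hence r: "r = Suc n" "2 \<le> c" "Suc c \<le> i" using h unfolding fill by auto
      have "H ! (i - Suc c) \<le> H ! (i - c)" using sH lH im r by (simp add: sorted_nth_mono)
      thus ?thesis using E r by simp
    qed
  next
    fix r s assume h: "r < s \<and> filled \<gamma> [1] r 1 \<and> filled \<gamma> [1] s 1"
    hence "r \<le> n" "s \<le> n" "box T' r 1" "box T' s 1" unfolding fill by auto
    moreover hence "1 \<le> r" by (simp add: box_def)
    ultimately show "ent (T' @ [row]) r 1 < ent (T' @ [row]) s 1"
      using E good_F[OF gT'] h bp by simp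
  next
    fix r s c
    assume h: "r < s \<and> 1 \<le> c \<and> filled \<gamma> [1] s (c + 1) \<and>
          (inner \<gamma> [1] r c \<or> filled \<gamma> [1] r c \<and> ent (T' @ [row]) s (c + 1) \<le> ent (T' @ [row]) r c)"
    have sle: "s \<le> Suc n" using h unfolding fill box_def n_def by auto
    have rn: "r \<le> n" using h sle by simp
    have fr: "filled \<gamma> [1] r c" and le: "ent (T' @ [row]) s (c + 1) \<le> ent (T' @ [row]) r c"
      using h inn rn by auto
    have brc: "0 < ent T' r c" using fr rn unfolding fill bp by auto
    have goal: "ent (T' @ [row]) s (Suc c) < ent (T' @ [row]) r (Suc c)"
    proof (cases "s \<le> n")
      case True
      have "0 < ent T' s (Suc c)" using h True unfolding fill bp by auto
      thus ?thesis using good_T[OF gT', of r s c] h le E True rn by simp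
    next
      case False
      hence s: "s = Suc n" "2 \<le> Suc c" "Suc c \<le> i" using h sle unfolding fill by auto
      have cm: "c \<le> m" using s im by simp
      have iv: "i - Suc c = m - c" using im by simp
      have "H ! (m - c) \<le> ent T' r c" using le E s rn iv by simp
      hence "H ! (m - c) < ent T' r (Suc c)" using PcH[OF _ cm] h brc unfolding Pc_def by auto
      thus ?thesis using E s rn iv by simp
    qed
    have "0 < ent T' r (Suc c)" using goal E rn by simp
    hence "filled \<gamma> [1] r (c + 1)" unfolding fill bp using rn by simp
    thus "inner \<gamma> [1] r (c + 1) \<or> filled \<gamma> [1] r (c + 1) \<and> ent (T' @ [row]) s (c + 1) < ent (T' @ [row]) r (c + 1)"
      using goal by simp
  qed
qed



end
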